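(* Let $A$ be an Archimedean semiprime $f$-algebra which is bounded quasi-inversion closed, and let $a\in A$ with $a\le 0$. Then $a$ is quasi-invertible and its quasi-inverse $a^\ast$ satisfies $0\le a^\ast$.
   Context: An $f$-algebra is a real associative algebra that is a vector lattice with $A_+A_+\subseteq A_+$ and such that $a\wedge b=0$ implies $ac\wedge b=ca\wedge b=0$ for all $c\in A_+$; it is semiprime if $0$ is its only nilpotent element. An element $a\in A$ is quasi-invertible if there is $a^\ast\in A$ (necessarily unique, called the quasi-inverse) with $a+a^\ast=aa^\ast$; $Q(A)$ denotes the set of such elements. $A$ is bounded quasi-inversion closed if for every $a\in A$, $|a|\le|a^2-a|$ implies $a\in Q(A)$. *)

theory Defs
  imports "HOL-Analysis.Analysis"
begin

definition vabs :: "'a::{ordered_real_vector, lattice} \<Rightarrow> 'a" where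
  "vabs a = sup a (- a)"

text \<open>Positive powers: npow1 a n = a^(n+1) (no unit needed).\<close>
fun npow1 :: "'a::times \<Rightarrow> nat \<Rightarrow> 'a" where
  "npow1 a 0 = a"
| "npow1 a (Suc n) = a * npow1 a n"

definition f_algebra :: "'a::{real_algebra, ordered_real_vector, lattice} itself \<Rightarrow> bool" where
  "f_algebra _ \<longleftrightarrow>
     (\<forall>a b::'a. 0 \<le> a \<and> 0 \<le> b \<longrightarrow> 0 \<le> a * b) \<and>
     (\<forall>a b c::'a. inf a b = 0 \<and> 0 \<le> c \<longrightarrow> inf (a * c) b = 0 \<and> inf (c * a) b = 0)"

definition archimedean_vl :: "'a::{ordered_real_vector, lattice} itself \<Rightarrow> bool" where
  "archimedean_vl _ \<longleftrightarrow>
     (\<forall>a b::'a. 0 \<le> a \<and> (\<forall>n::nat. of_nat n *\<^sub>R a \<le> b) \<longrightarrow> a = 0)"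

definition semiprime :: "'a::{real_algebra} itself \<Rightarrow> bool" where
  "semiprime _ \<longleftrightarrow> (\<forall>(a::'a) n. npow1 a n = 0 \<longrightarrow> a = 0)"

definition quasi_inverse :: "'a::ring \<Rightarrow> 'a \<Rightarrow> bool" where
  "quasi_inverse a b \<longleftrightarrow> a + b = a * b"

definition quasi_invertible :: "'a::ring \<Rightarrow> bool" where
  "quasi_invertible a \<longleftrightarrow> (\<exists>b. quasi_inverse a b)"

definition bqi_closed :: "'a::{real_algebra, ordered_real_vector, lattice} itself \<Rightarrow> bool" where
  "bqi_closed _ \<longleftrightarrow> (\<forall>a::'a. vabs a \<le> vabs (a * a - a) \<longrightarrow> quasi_invertible a)"

end

theory Submission
  imports Defs "HOL-Library.Lattice_Algebras"
begin

lemma LG: "class.lattice_ab_group_add (+) (0::'a::{ordered_real_vector,lattice}) (-) uminus (\<le>) (<) inf sup"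
  by unfold_locales

context lattice_ab_group_add
begin

lemma disj_sum:
  fixes z x y :: "'a"
  assumes "0 \<le> z" "0 \<le> x" "0 \<le> y" "inf z x = 0" "inf z y = 0"
  shows "inf z (x + y) = 0"
proof -
  define w where "w = inf z (x + y)"
  have w0: "0 \<le> w" unfolding w_def using assms by (simp add: add_nonneg_nonneg)
  have "w \<le> x + y" unfolding w_def by simp
  hence "w - y \<le> x" by (simp add: algebra_simps)
  moreover have "w - y \<le> z" using assms(3) unfolding w_def
    by (metis diff_le_eq inf.coboundedI1 le_add_same_cancel1 order_refl)
  ultimately have "w - y \<le> inf z x" by simp
  hence "w \<le> y" using assms(4) by simp
  moreover have "w \<le> z" unfolding w_def by simp
  ultimately have "w \<le> inf z y" by simp
  hence "w \<le> 0" using assms(5) by simp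
  hence "w = 0" using w0 by (rule order.antisym)
  thus ?thesis unfolding w_def .
qed

lemma pos_neg_disj:
  fixes b :: "'a"
  shows "inf (sup b 0) (sup (- b) 0) = 0"
proof -
  let ?p = "sup b 0" and ?m = "sup (- b) 0"
  have pm: "?p - ?m = b" using prts[of b] pprt_neg[of b]
    by (simp add: pprt_def nprt_def)
  have "inf ?p ?m - ?m = inf (?p - ?m) (?m - ?m)"
    unfolding diff_conv_add_uminus by (rule add_inf_distrib_right)
  also have "\<dots> = inf b 0" by (simp only: pm diff_self)
  also have "\<dots> = - ?m" by (simp add: neg_sup_eq_inf)
  finally show ?thesis by simp
qed

end

theorem lemma1:
  fixes a :: "'a::{real_algebra, ordered_real_vector, lattice}"
  assumes "f_algebra TYPE('a)"
    and "archimedean_vl TYPE('a)"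
    and "semiprime TYPE('a)"
    and "bqi_closed TYPE('a)"
    and "a \<le> 0"
  shows "quasi_invertible a \<and> (\<forall>b. quasi_inverse a b \<longrightarrow> 0 \<le> b)"
proof
  have pos: "\<And>x y::'a. 0 \<le> x \<Longrightarrow> 0 \<le> y \<Longrightarrow> 0 \<le> x * y"
    using assms(1) unfolding f_algebra_def by blast
  have orth: "\<And>x y c::'a. inf x y = 0 \<Longrightarrow> 0 \<le> c \<Longrightarrow> inf (c * x) y = 0"
    using assms(1) unfolding f_algebra_def by blast
  define c where "c = - a"
  have c0: "0 \<le> c" using assms(5) unfolding c_def by simp
  have sq: "a * a = c * c" unfolding c_def by simp
  show "quasi_invertible a"
  proof -
    have "vabs a = c" unfolding vabs_def c_def using assms(5)
      by (simp add: sup_absorb2 order_trans[OF assms(5)])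
    moreover have "a * a - a = c * c + c" unfolding sq c_def by simp
    moreover have "0 \<le> c * c" using pos c0 by blast
    ultimately have "vabs a \<le> vabs (a * a - a)" unfolding vabs_def
      by (simp add: le_supI1 add_nonneg_nonneg)
    thus ?thesis using assms(4) unfolding bqi_closed_def by blast
  qed
  show "\<forall>b. quasi_inverse a b \<longrightarrow> 0 \<le> b"
  proof (intro allI impI)
    fix b assume "quasi_inverse a b"
    hence qb: "a + b = a * b" unfolding quasi_inverse_def .
    define p where "p = sup b 0"
    define m where "m = sup (- b) 0"
    have p0: "0 \<le> p" and m0: "0 \<le> m" unfolding p_def m_def by simp_all
    have bpm: "b = p - m" using lattice_ab_group_add.prts[OF LG, of b] lattice_ab_group_add.pprt_neg[OF LG, of b]
      unfolding p_def m_def by (simp add: lattice_ab_group_add.pprt_def[OF LG] lattice_ab_group_add.nprt_def[OF LG])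
    have pm: "inf p m = 0" unfolding p_def m_def by (rule lattice_ab_group_add.pos_neg_disj[OF LG])
    have mp: "inf m p = 0" using pm by (simp add: inf_commute)
    have mcp: "inf m (c * p) = 0" using orth[OF pm c0] by (simp add: inf_commute)
    have cp0: "0 \<le> c * p" and cm0: "0 \<le> c * m" using pos c0 p0 m0 by auto
    have "b + c * b = c" using qb unfolding c_def by (simp add: algebra_simps)
    hence eq: "m + c * m = p + c * p - c" unfolding bpm by (simp add: algebra_simps)
    have "m \<le> p + c * p" using eq cm0 c0
      by (metis add_increasing2 diff_le_eq le_add_same_cancel1 order_trans)
    hence "inf m (p + c * p) = m" by (simp add: inf_absorb1)
    moreover have "inf m (p + c * p) = 0" using lattice_ab_group_add.disj_sum[OF LG m0 p0 cp0 mp mcp] .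
    ultimately have "m = 0" by simp
    thus "0 \<le> b" using bpm p0 by simp
  qed
qed

end
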